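(* Every triangulated polygon $T$ with no interior vertices has a (possibly disconnected) scaffold.
   Context: A triangulated polygon with no interior vertices is a finite $2$-dimensional simplicial complex homeomorphic to a closed disk all of whose vertices lie on the boundary; its triangles are called facets. The (vertex-facet) incidence graph of $T$ is the bipartite graph whose nodes are the facets and vertices of $T$, with an arc $(v,f)$ whenever $v$ is a vertex of $f$. A scaffold is a subgraph of the incidence graph containing every facet node, in which every facet node has degree exactly $2$ and at most two vertex nodes have odd degree. (The empty triangulation has the empty scaffold.) *)

theory Defs
  imports "HOL-Analysis.Analysis"
begin

text \<open>A finite pure 2-dimensional simplicial complex is given by its set of facets
  (triangles), each a 3-element set of vertices. Its vertices are the union of the facets.\<close>

definition complex_vertices :: "'v set set \<Rightarrow> 'v set" where
  "complex_vertices F = \<Union>F"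

text \<open>Standard geometric realization in the function space 'v \<Rightarrow> real (product topology):
  convex combinations of the vertices of a single facet (barycentric coordinates).\<close>

definition realization :: "'v set set \<Rightarrow> ('v \<Rightarrow> real) set" where
  "realization F = {x. \<exists>f\<in>F. (\<forall>v. 0 \<le> x v) \<and> (\<forall>v. v \<notin> f \<longrightarrow> x v = 0) \<and> sum x f = 1}"

definition vertex_point :: "'v \<Rightarrow> ('v \<Rightarrow> real)" where
  "vertex_point v = (\<lambda>w. if w = v then 1 else 0)"

definition triangulated_polygon_no_interior :: "'v set set \<Rightarrow> bool" where
  "triangulated_polygon_no_interior F \<longleftrightarrow>
     finite F \<and> (\<forall>f\<in>F. card f = 3) \<and>
     (\<exists>h k. homeomorphism (realization F) (cball (0::complex) 1) h k \<and>
            (\<forall>v\<in>complex_vertices F. h (vertex_point v) \<in> sphere 0 1))"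

definition incidence_arcs :: "'v set set \<Rightarrow> ('v \<times> 'v set) set" where
  "incidence_arcs F = {(v, f). f \<in> F \<and> v \<in> f}"

definition vdeg :: "('v \<times> 'v set) set \<Rightarrow> 'v \<Rightarrow> nat" where
  "vdeg S v = card {f. (v, f) \<in> S}"

definition fdeg :: "('v \<times> 'v set) set \<Rightarrow> 'v set \<Rightarrow> nat" where
  "fdeg S f = card {v. (v, f) \<in> S}"

definition scaffold :: "'v set set \<Rightarrow> ('v \<times> 'v set) set \<Rightarrow> bool" where
  "scaffold F S \<longleftrightarrow> S \<subseteq> incidence_arcs F \<and> (\<forall>f\<in>F. fdeg S f = 2) \<and>
     card {v \<in> complex_vertices F. odd (vdeg S v)} \<le> 2"

end

theory Submission
  imports Defs
begin
lemma nc: "\<not> collinear (cball (0::complex) 1)"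
  by (simp add: collinear_aff_dim aff_dim_cball)

lemma closed_simplex:
  assumes "finite f"
  shows "closed {x::'v\<Rightarrow>real. (\<forall>v. 0 \<le> x v) \<and> (\<forall>v. v \<notin> f \<longrightarrow> x v = 0) \<and> sum x f = 1}"
proof -
  have c: "continuous_on UNIV (\<lambda>x::'v\<Rightarrow>real. x v)" for v by simp
  have 1: "closed {x::'v\<Rightarrow>real. \<forall>v. 0 \<le> x v}"
    using closed_Collect_le[OF continuous_on_const c] by (auto intro!: closed_Collect_all)
  have 2: "closed {x::'v\<Rightarrow>real. \<forall>v. v \<notin> f \<longrightarrow> x v = 0}"
    using closed_Collect_eq[OF c continuous_on_const] by (auto intro!: closed_Collect_all closed_Collect_imp)
  have 3: "closed {x::'v\<Rightarrow>real. sum x f = 1}"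
    by (intro closed_Collect_eq continuous_intros) auto
  have "closed ({x::'v\<Rightarrow>real. \<forall>v. 0 \<le> x v} \<inter> {x. \<forall>v. v \<notin> f \<longrightarrow> x v = 0} \<inter> {x. sum x f = 1})"
    using 1 2 3 by blast
  then show ?thesis by (simp add: Int_def conj_assoc)
qed

lemma closed_realization:
  fixes F :: "'v set set"
  assumes "finite F" "\<forall>f\<in>F. finite f"
  shows "closed (realization F)"
proof -
  have "realization F = (\<Union>f\<in>F. {x::'v\<Rightarrow>real. (\<forall>v. 0 \<le> x v) \<and> (\<forall>v. v \<notin> f \<longrightarrow> x v = 0) \<and> sum x f = 1})"
    unfolding realization_def by auto
  then show ?thesis using assms by (auto intro!: closed_UN closed_simplex)
qed

lemma punct_connected:
  fixes F :: "'v set set"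
  assumes "triangulated_polygon_no_interior F"
  shows "connected (realization F - vertex_point ` (\<Union>F))"
proof -
  from assms have fin: "finite F" and c3: "\<forall>f\<in>F. card f = 3"
    unfolding triangulated_polygon_no_interior_def by auto
  from assms obtain h k where hk: "homeomorphism (realization F) (cball (0::complex) 1) h k"
    unfolding triangulated_polygon_no_interior_def by auto
  define R where "R = realization F"
  define X where "X = R \<inter> vertex_point ` (\<Union>F)"
  have ffin: "finite f" if "f \<in> F" for f using c3 that card.infinite by fastforce
  have "finite (\<Union>F)" using fin ffin by auto
  then have fX: "finite X" unfolding X_def by auto
  have hR: "h ` R = cball 0 1" and kc: "k ` cball 0 1 = R" and kh: "\<And>x. x \<in> R \<Longrightarrow> k (h x) = x"
    and hk2: "\<And>y. y \<in> cball 0 1 \<Longrightarrow> h (k y) = y" and ck: "continuous_on (cball 0 1) k"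
    using hk unfolding homeomorphism_def R_def by auto
  have e1: "h ` (R - X) = cball 0 1 - h ` X"
  proof
    show "h ` (R - X) \<subseteq> cball 0 1 - h ` X"
    proof
      fix y assume "y \<in> h ` (R - X)"
      then obtain x where x: "x \<in> R" "x \<notin> X" "y = h x" by auto
      have "y \<in> cball 0 1" using x hR by auto
      moreover have "y \<notin> h ` X"
      proof
        assume "y \<in> h ` X"
        then obtain z where "z \<in> X" "y = h z" by auto
        then have "k y = z" using kh X_def by auto
        moreover have "k y = x" using kh x by auto
        ultimately show False using x \<open>z \<in> X\<close> by simp
      qed
      ultimately show "y \<in> cball 0 1 - h ` X" by simp
    qed
    show "cball 0 1 - h ` X \<subseteq> h ` (R - X)"
    proof
      fix y assume y: "y \<in> cball 0 1 - h ` X"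
      then have "k y \<in> R" using kc by auto
      moreover have "k y \<notin> X" using y hk2 by (metis DiffD1 DiffD2 image_eqI)
      ultimately show "y \<in> h ` (R - X)" using hk2 y by (metis DiffD1 DiffI image_eqI)
    qed
  qed
  have "connected (cball (0::complex) 1 - h ` X)"
    by (rule connected_convex_diff_countable) (auto simp: nc fX countable_finite)
  then have "connected (k ` (cball (0::complex) 1 - h ` X))"
    by (rule connected_continuous_image[rotated]) (rule continuous_on_subset[OF ck], auto)
  moreover have "k ` (h ` (R - X)) = R - X"
  proof -
    have "k ` (h ` (R - X)) = (\<lambda>x. k (h x)) ` (R - X)" by (simp add: image_image)
    also have "\<dots> = id ` (R - X)" using kh by (intro image_cong) auto
    finally show ?thesis by simp
  qed
  ultimately have "connected (R - X)" using e1 by simp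
  moreover have "R - X = realization F - vertex_point ` (\<Union>F)" unfolding X_def R_def by auto
  ultimately show ?thesis by simp
qed

lemma dual_conn:
  fixes F :: "'v set set"
  assumes fin: "finite F" and c3: "\<forall>f\<in>F. card f = 3"
    and con: "connected (realization F - vertex_point ` (\<Union>F))"
    and A: "A \<subseteq> F" "A \<noteq> {}" "A \<noteq> F"
  shows "\<exists>a\<in>A. \<exists>b\<in>F-A. 2 \<le> card (a \<inter> b)"
proof (rule ccontr)
  assume no: "\<not> ?thesis"
  have ffin: "finite f" if "f \<in> F" for f using c3 that card.infinite by fastforce
  define P where "P = realization F - vertex_point ` (\<Union>F)"
  define E1 where "E1 = P \<inter> realization A"
  define E2 where "E2 = P \<inter> realization (F - A)"
  have cl1: "closedin (top_of_set P) E1" unfolding E1_def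
    using A fin ffin by (intro closedin_closed_Int closed_realization) (auto intro: finite_subset)
  have cl2: "closedin (top_of_set P) E2" unfolding E2_def
    using A fin ffin by (intro closedin_closed_Int closed_realization) auto
  have cov: "P \<subseteq> E1 \<union> E2" unfolding E1_def E2_def P_def realization_def by blast
  have disj: "E1 \<inter> E2 = {}"
  proof (rule ccontr)
    assume "E1 \<inter> E2 \<noteq> {}"
    then obtain x a b where xP: "x \<in> P" and a: "a \<in> A" and b: "b \<in> F - A"
      and xa: "(\<forall>v. 0 \<le> x v) \<and> (\<forall>v. v \<notin> a \<longrightarrow> x v = 0) \<and> sum x a = 1"
      and xb: "(\<forall>v. v \<notin> b \<longrightarrow> x v = 0)"
      unfolding E1_def E2_def realization_def by blast
    have fa: "finite a" using a A ffin by auto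
    obtain v1 where v1: "v1 \<in> a" "x v1 \<noteq> 0"
      using xa by (metis sum.neutral zero_neq_one)
    have "\<exists>v2. v2 \<noteq> v1 \<and> x v2 \<noteq> 0"
    proof (rule ccontr)
      assume "\<not> ?thesis"
      then have z: "\<And>v. v \<noteq> v1 \<Longrightarrow> x v = 0" by auto
      have "sum x a = x v1" using fa v1(1) z by (simp add: sum.remove)
      then have "x v1 = 1" using xa by simp
      then have "x = vertex_point v1" unfolding vertex_point_def using z by auto
      moreover have "v1 \<in> \<Union>F" using v1 a A by auto
      ultimately show False using xP unfolding P_def by auto
    qed
    then obtain v2 where v2: "v2 \<noteq> v1" "x v2 \<noteq> 0" by auto
    have "{v1, v2} \<subseteq> a \<inter> b" using v1 v2 xa xb by auto
    then have "card {v1, v2} \<le> card (a \<inter> b)" using fa by (intro card_mono) auto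
    then have "2 \<le> card (a \<inter> b)" using v2 by simp
    then show False using no a b by auto
  qed
  have ne: "P \<inter> realization G \<noteq> {}" if G: "G \<subseteq> F" "G \<noteq> {}" for G
  proof -
    obtain g where g: "g \<in> G" using G by auto
    define x where "x = (\<lambda>v. if v \<in> g then 1/3 else (0::real))"
    have cg: "card g = 3" using g G c3 by auto
    have "sum x g = 1" unfolding x_def using cg by simp
    then have "x \<in> realization G" unfolding realization_def x_def using g by auto
    moreover have "x \<in> realization F" using calculation G unfolding realization_def by auto
    moreover have "x \<noteq> vertex_point w" for w
    proof
      assume "x = vertex_point w"
      then have "x w = 1" unfolding vertex_point_def by simp
      then show False unfolding x_def by (auto split: if_splits)
    qed
    ultimately show ?thesis unfolding P_def by auto
  qed
  have "E1 \<noteq> {}" unfolding E1_def using ne A by auto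
  moreover have "E2 \<noteq> {}" unfolding E2_def using ne A by auto
  ultimately show False using con cl1 cl2 cov disj unfolding connected_closedin P_def by blast
qed
lemma add_facet:
  fixes G :: "'v set set"
  assumes S: "S \<subseteq> incidence_arcs G" and fin: "finite G" and fG: "f \<notin> G"
    and xy: "x \<in> f" "y \<in> f" "x \<noteq> y" and deg: "\<forall>g\<in>G. fdeg S g = 2"
  shows "S \<union> {(x,f),(y,f)} \<subseteq> incidence_arcs (insert f G)"
    "\<forall>g\<in>insert f G. fdeg (S \<union> {(x,f),(y,f)}) g = 2"
    "vdeg (S \<union> {(x,f),(y,f)}) v = vdeg S v + (if v = x \<or> v = y then 1 else 0)"
proof -
  show "S \<union> {(x,f),(y,f)} \<subseteq> incidence_arcs (insert f G)"
    using S xy unfolding incidence_arcs_def by auto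
  have "fdeg (S \<union> {(x,f),(y,f)}) g = 2" if g: "g \<in> insert f G" for g
  proof (cases "g = f")
    case True
    have "{w. (w, g) \<in> S \<union> {(x,f),(y,f)}} = {x,y}"
      using True S fG unfolding incidence_arcs_def by auto
    then show ?thesis unfolding fdeg_def using xy by simp
  next
    case False
    then have "{w. (w, g) \<in> S \<union> {(x,f),(y,f)}} = {w. (w, g) \<in> S}" by auto
    then show ?thesis using deg g False unfolding fdeg_def by auto
  qed
  then show "\<forall>g\<in>insert f G. fdeg (S \<union> {(x,f),(y,f)}) g = 2" by blast
  have fs: "finite {g. (v, g) \<in> S}"
    using S fin unfolding incidence_arcs_def by (auto intro: finite_subset)
  have nf: "f \<notin> {g. (v, g) \<in> S}" using S fG unfolding incidence_arcs_def by auto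
  have "{g. (v, g) \<in> S \<union> {(x,f),(y,f)}} = {g. (v, g) \<in> S} \<union> (if v = x \<or> v = y then {f} else {})"
    by auto
  then show "vdeg (S \<union> {(x,f),(y,f)}) v = vdeg S v + (if v = x \<or> v = y then 1 else 0)"
    unfolding vdeg_def using fs nf by auto
qed

lemma vdeg_out:
  assumes "S \<subseteq> incidence_arcs G" "v \<notin> \<Union>G"
  shows "vdeg S v = 0"
proof -
  have "{g. (v, g) \<in> S} = {}" using assms unfolding incidence_arcs_def by auto
  then show ?thesis unfolding vdeg_def by simp
qed

definition good :: "'v set set \<Rightarrow> 'v \<Rightarrow> 'v \<Rightarrow> ('v \<Rightarrow> bool) \<Rightarrow> bool" where
  "good G u w p \<longleftrightarrow> (\<exists>S. S \<subseteq> incidence_arcs G \<and> (\<forall>g\<in>G. fdeg S g = 2) \<and>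
     (\<forall>v\<in>\<Union>G. v \<noteq> u \<longrightarrow> v \<noteq> w \<longrightarrow> (even (vdeg S v) \<longleftrightarrow> p v)))"

definition sinv :: "'v set set \<Rightarrow> bool" where
  "sinv G \<longleftrightarrow> (\<exists>u\<in>\<Union>G. \<forall>w\<in>\<Union>G. w \<noteq> u \<longrightarrow> (\<forall>p. good G u w p))"

lemma ext:
  fixes G :: "'v set set"
  assumes S: "S \<subseteq> incidence_arcs G" and deg: "\<forall>g\<in>G. fdeg S g = 2" and fin: "finite G"
    and fG: "f \<notin> G" and xy: "x \<in> f" "y \<in> f" "x \<noteq> y"
    and par: "\<forall>v\<in>\<Union>(insert f G). v \<noteq> u \<longrightarrow> v \<noteq> w \<longrightarrow>
       (even (vdeg S v) \<longleftrightarrow> (if v = x \<or> v = y then \<not> p v else p v))"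
  shows "good (insert f G) u w p"
proof -
  note A = add_facet[OF S fin fG xy deg]
  have "\<forall>v\<in>\<Union>(insert f G). v \<noteq> u \<longrightarrow> v \<noteq> w \<longrightarrow>
       (even (vdeg (S \<union> {(x,f),(y,f)}) v) \<longleftrightarrow> p v)"
    using par A(3) by auto
  then show ?thesis unfolding good_def using A(1,2) by blast
qed

lemma base:
  fixes f :: "'v set"
  assumes "card f = 3"
  shows "sinv {f}"
proof -
  obtain a b c where f: "f = {a,b,c}" "a \<noteq> b" "a \<noteq> c" "b \<noteq> c"
    using assms card_3_iff by metis
  have "good {f} a w p" if w: "w \<in> f" "w \<noteq> a" for w p
  proof -
    obtain r where r: "r \<in> f" "r \<noteq> a" "r \<noteq> w" "\<forall>v\<in>f. v = a \<or> v = w \<or> v = r"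
      using w f by auto
    show ?thesis
    proof (cases "p r")
      case True
      show ?thesis
        by (rule ext[of "{}" "{}" f a w]) (use True r w f in \<open>auto simp: incidence_arcs_def vdeg_def\<close>)
    next
      case False
      show ?thesis
        by (rule ext[of "{}" "{}" f w r]) (use False r w f in \<open>auto simp: incidence_arcs_def vdeg_def\<close>)
    qed
  qed
  then show ?thesis unfolding sinv_def using f by auto
qed

lemma step:
  fixes G :: "'v set set"
  assumes fin: "finite G" and fG: "f \<notin> G" and c3: "card f = 3"
    and ov: "2 \<le> card (f \<inter> \<Union>G)" and I: "sinv G"
  shows "sinv (insert f G)"
proof -
  obtain u where u: "u \<in> \<Union>G" and U: "\<And>w p. w \<in> \<Union>G \<Longrightarrow> w \<noteq> u \<Longrightarrow> good G u w p"
    using I unfolding sinv_def by blast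
  have ff: "finite f" using c3 card.infinite by fastforce
  have main: "good (insert f G) u w p" if w: "w \<in> \<Union>(insert f G)" "w \<noteq> u" for w p
  proof (cases "f \<subseteq> \<Union>G")
    case True
    obtain x y where xy: "x \<in> f" "y \<in> f" "x \<noteq> y"
    proof -
      obtain x y z where "f = {x,y,z}" "x \<noteq> y" using c3 card_3_iff by metis
      then show ?thesis using that[of x y] by auto
    qed
    define p' where "p' = (\<lambda>v. if v = x \<or> v = y then \<not> p v else p v)"
    have wG: "w \<in> \<Union>G" using w True by auto
    obtain S where S: "S \<subseteq> incidence_arcs G" "\<forall>g\<in>G. fdeg S g = 2"
      "\<forall>v\<in>\<Union>G. v \<noteq> u \<longrightarrow> v \<noteq> w \<longrightarrow> (even (vdeg S v) \<longleftrightarrow> p' v)"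
      using U[OF wG w(2), of p'] unfolding good_def by (elim exE conjE) blast
    show ?thesis
      by (rule ext[OF S(1,2) fin fG xy]) (use S(3) True in \<open>auto simp: p'_def\<close>)
  next
    case False
    then obtain b where b: "b \<in> f" "b \<notin> \<Union>G" by auto
    have "f \<inter> \<Union>G \<subseteq> f - {b}" using b by auto
    moreover have "card (f - {b}) = 2" using c3 b ff by simp
    ultimately have eq: "f \<inter> \<Union>G = f - {b}"
      using card_seteq[of "f - {b}" "f \<inter> \<Union>G"] ov ff by simp
    then obtain a0 c0 where ac0: "f - {b} = {a0, c0}" "a0 \<noteq> c0"
      using \<open>card (f - {b}) = 2\<close> unfolding card_2_iff by blast
    obtain a c where ac: "f - {b} = {a, c}" "a \<noteq> c" "a \<noteq> u"
    proof (cases "a0 = u")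
      case True
      then show ?thesis using that[of c0 a0] ac0 by (auto simp: insert_commute)
    next
      case False
      then show ?thesis using that[of a0 c0] ac0 by auto
    qed
    have aG: "a \<in> \<Union>G" and cG: "c \<in> \<Union>G" using ac eq by auto
    have af: "a \<in> f" and cf: "c \<in> f" and ba: "b \<noteq> a" and bc: "b \<noteq> c" using ac by auto
    have Uins: "\<Union>(insert f G) = insert b (\<Union>G)" using eq b by auto
    show ?thesis
    proof (cases "w = b")
      case False
      then have wG: "w \<in> \<Union>G" using w Uins by auto
      show ?thesis
      proof (cases "p b")
        case True
        define p' where "p' = (\<lambda>v. if v = a \<or> v = c then \<not> p v else p v)"
        obtain S where S: "S \<subseteq> incidence_arcs G" "\<forall>g\<in>G. fdeg S g = 2"
          "\<forall>v\<in>\<Union>G. v \<noteq> u \<longrightarrow> v \<noteq> w \<longrightarrow> (even (vdeg S v) \<longleftrightarrow> p' v)"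
          using U[OF wG w(2), of p'] unfolding good_def by (elim exE conjE) blast
        have vb: "vdeg S b = 0" using vdeg_out[OF S(1) b(2)] .
        show ?thesis
          by (rule ext[OF S(1,2) fin fG af cf ac(2)]) (use S(3) True vb ba bc Uins in \<open>auto simp: p'_def\<close>)
      next
        case False
        define p' where "p' = (\<lambda>v. if v = b \<or> v = c then \<not> p v else p v)"
        obtain S where S: "S \<subseteq> incidence_arcs G" "\<forall>g\<in>G. fdeg S g = 2"
          "\<forall>v\<in>\<Union>G. v \<noteq> u \<longrightarrow> v \<noteq> w \<longrightarrow> (even (vdeg S v) \<longleftrightarrow> p' v)"
          using U[OF wG w(2), of p'] unfolding good_def by (elim exE conjE) blast
        have vb: "vdeg S b = 0" using vdeg_out[OF S(1) b(2)] .
        show ?thesis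
          by (rule ext[OF S(1,2) fin fG b(1) cf bc]) (use S(3) False vb Uins in \<open>auto simp: p'_def\<close>)
      qed
    next
      case True
      define p' where "p' = (\<lambda>v. if v = c then \<not> p v else p v)"
      obtain S where S: "S \<subseteq> incidence_arcs G" "\<forall>g\<in>G. fdeg S g = 2"
        "\<forall>v\<in>\<Union>G. v \<noteq> u \<longrightarrow> v \<noteq> a \<longrightarrow> (even (vdeg S v) \<longleftrightarrow> p' v)"
        using U[OF aG ac(3), of p'] unfolding good_def by (elim exE conjE) blast
      show ?thesis
      proof (cases "even (vdeg S a) \<longleftrightarrow> p a")
        case T: True
        show ?thesis
        proof (rule ext[OF S(1,2) fin fG b(1) cf bc], intro ballI impI)
          fix v assume v: "v \<in> \<Union>(insert f G)" "v \<noteq> u" "v \<noteq> w"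
          then have "v \<in> \<Union>G" using Uins True by auto
          then show "even (vdeg S v) = (if v = b \<or> v = c then \<not> p v else p v)"
            using S(3) T True ba ac(2) v by (cases "v = a") (auto simp: p'_def)
        qed
      next
        case F: False
        show ?thesis
        proof (rule ext[OF S(1,2) fin fG af cf ac(2)], intro ballI impI)
          fix v assume v: "v \<in> \<Union>(insert f G)" "v \<noteq> u" "v \<noteq> w"
          then have "v \<in> \<Union>G" using Uins True by auto
          then show "even (vdeg S v) = (if v = a \<or> v = c then \<not> p v else p v)"
            using S(3) F True ba ac(2) v by (cases "v = a") (auto simp: p'_def)
        qed
      qed
    qed
  qed
  show ?thesis unfolding sinv_def using u main by blast
qed

lemma build:
  fixes F :: "'v set set"
  assumes fin: "finite F" and c3: "\<forall>f\<in>F. card f = 3" and ne: "F \<noteq> {}"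
    and con: "\<And>A. A \<subseteq> F \<Longrightarrow> A \<noteq> {} \<Longrightarrow> A \<noteq> F \<Longrightarrow> \<exists>a\<in>A. \<exists>b\<in>F-A. 2 \<le> card (a \<inter> b)"
  shows "1 \<le> n \<Longrightarrow> n \<le> card F \<Longrightarrow> \<exists>G\<subseteq>F. card G = n \<and> sinv G"
proof (induction n)
  case 0
  then show ?case by simp
next
  case (Suc n)
  show ?case
  proof (cases "n = 0")
    case True
    obtain f where "f \<in> F" using ne by auto
    then show ?thesis using True base c3 by (intro exI[of _ "{f}"]) auto
  next
    case False
    then obtain G where G: "G \<subseteq> F" "card G = n" "sinv G" using Suc by auto
    have fG: "finite G" using G fin finite_subset by auto
    have "G \<noteq> {}" using G False by auto
    moreover have "G \<noteq> F" using G Suc.prems by auto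
    ultimately obtain a b where ab: "a \<in> G" "b \<in> F - G" "2 \<le> card (a \<inter> b)"
      using con G(1) by blast
    have fb: "finite b" using ab c3 card.infinite by fastforce
    have "card (a \<inter> b) \<le> card (b \<inter> \<Union>G)" using ab fb by (intro card_mono) auto
    then have ov: "2 \<le> card (b \<inter> \<Union>G)" using ab by simp
    have "sinv (insert b G)" using step[OF fG _ _ ov G(3)] ab c3 by auto
    moreover have "card (insert b G) = Suc n" using ab G fG by simp
    ultimately show ?thesis using G ab by (intro exI[of _ "insert b G"]) auto
  qed
qed

theorem lemma3:
  fixes F :: "'v set set"
  assumes "triangulated_polygon_no_interior F"
  shows "\<exists>S. scaffold F S"
proof -
  from assms have fin: "finite F" and c3: "\<forall>f\<in>F. card f = 3"
    unfolding triangulated_polygon_no_interior_def by auto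
  from assms obtain h k where hk: "homeomorphism (realization F) (cball (0::complex) 1) h k"
    unfolding triangulated_polygon_no_interior_def by auto
  have ne: "F \<noteq> {}"
  proof
    assume "F = {}"
    then have "realization F = {}" unfolding realization_def by auto
    then show False using hk unfolding homeomorphism_def by auto
  qed
  have con: "\<And>A. A \<subseteq> F \<Longrightarrow> A \<noteq> {} \<Longrightarrow> A \<noteq> F \<Longrightarrow> \<exists>a\<in>A. \<exists>b\<in>F-A. 2 \<le> card (a \<inter> b)"
    using dual_conn[OF fin c3 punct_connected[OF assms]] by blast
  have "1 \<le> card F" using fin ne by (simp add: Suc_le_eq card_gt_0_iff)
  then obtain G where "G \<subseteq> F" "card G = card F" "sinv G"
    using build[OF fin c3 ne con] by blast
  then have "G = F" using fin card_subset_eq by blast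
  with \<open>sinv G\<close> obtain u where u: "u \<in> \<Union>F" and U: "\<And>w p. w \<in> \<Union>F \<Longrightarrow> w \<noteq> u \<Longrightarrow> good F u w p"
    unfolding sinv_def by blast
  obtain f where f: "f \<in> F" using ne by auto
  then obtain x y z where "f = {x,y,z}" "x \<noteq> y" using c3 card_3_iff by metis
  then obtain w where w: "w \<in> \<Union>F" "w \<noteq> u" using f by blast
  obtain S where S: "S \<subseteq> incidence_arcs F" "\<forall>g\<in>F. fdeg S g = 2"
    "\<forall>v\<in>\<Union>F. v \<noteq> u \<longrightarrow> v \<noteq> w \<longrightarrow> (even (vdeg S v) \<longleftrightarrow> True)"
    using U[OF w, of "\<lambda>_. True"] unfolding good_def by (elim exE conjE) blast
  have "{v \<in> complex_vertices F. odd (vdeg S v)} \<subseteq> {u, w}"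
    using S(3) unfolding complex_vertices_def by auto
  then have "card {v \<in> complex_vertices F. odd (vdeg S v)} \<le> card {u, w}"
    by (intro card_mono) auto
  also have "\<dots> \<le> 2" by (simp add: card_insert_le_m1)
  finally show ?thesis using S unfolding scaffold_def by blast
qed

end
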